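(* Let $c=\log(1/\epsilon)$. Then $\max_{w\in\Delta_K}\max_{Q\in(\Delta_{\mathcal X})^K}\sum_aw(a)D(Q_a\|\nu^i_a)\le c$ for every $i\in[m]$. Moreover, let $g':\mathbb R^m\to\mathbb R$ be bounded, Lipschitz, of compact support, with $g'(x)=g(x)$ for all $x\in[0,c]^m$, and let $V'$ be the unique viscosity solution of $\partial_tV'+H(\nabla_xV')=0$ on $\mathbb R^m\times[0,1)$, $V'(\cdot,1)=g'$. Then $V(x,t)=V'(x,t)$ whenever $t\in[0,1]$ and $0\le x_i\le c\,t$ for every $i\in[m]$.
   Context: $\mathcal X$ finite, $\Delta_{\mathcal X}$ the distributions on $\mathcal X$, $\Delta_K$ the simplex on $[K]$, $D$ the KL divergence; $m\ge2$ bandits $\nu^1,\dots,\nu^m$, $\nu^i=(\nu^i_a)_{a\in[K]}$, with $\nu^i_a(x)\ge\epsilon$ for all $i,a,x$, $\epsilon\in(0,1)$. $H(p)=\min_{Q\in(\Delta_{\mathcal X})^K}\max_{w\in\Delta_K}\sum_{i=1}^m\sum_aw(a)D(Q_a\|\nu^i_a)p_i$; $g(x)=\max_{j}\min_{i\ne j}x_i$; $V$ is the viscosity solution of $\partial_tV+H(\nabla_xV)=0$ on $\mathbb R^m\times[0,1)$, $V(\cdot,1)=g$. Viscosity solutions of such equations are the values of the zero-sum differential game with state dynamics $\dot x_i=\sum_aw(a)D(Q_a\|\nu^i_a)$, maximizer control $w\in\Delta_K$, minimizer control $Q\in(\Delta_{\mathcal X})^K$, and terminal payoff given by the terminal condition.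 *)

theory Defs
  imports "HOL-Analysis.Analysis"
begin

definition prob_simplex :: "('a::finite \<Rightarrow> real) set" where
  "prob_simplex = {w. (\<forall>a. 0 \<le> w a) \<and> sum w UNIV = 1}"

definition KL :: "('o::finite \<Rightarrow> real) \<Rightarrow> ('o \<Rightarrow> real) \<Rightarrow> real" where
  "KL q p = (\<Sum>x\<in>UNIV. if q x = 0 then 0 else q x * ln (q x / p x))"

text \<open>Hamiltonian H(p) = min_Q max_w sum_i sum_a w(a) D(Q_a || nu^i_a) p_i.
  Bandit i, arm a: nu i a, a distribution on outcomes.\<close>
definition Ham :: "('i::finite \<Rightarrow> 'a::finite \<Rightarrow> 'o::finite \<Rightarrow> real) \<Rightarrow> real^'i \<Rightarrow> real" where
  "Ham \<nu> p = (INF Q\<in>{Q. \<forall>a. Q a \<in> prob_simplex}. SUP w\<in>prob_simplex.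
      (\<Sum>i\<in>UNIV. \<Sum>a\<in>UNIV. w a * KL (Q a) (\<nu> i a) * p $ i))"

definition gpay :: "real^'i::finite \<Rightarrow> real" where
  "gpay x = Max (range (\<lambda>j. Min {x $ i | i. i \<noteq> j}))"

definition C1_test :: "((real^'i::finite) \<times> real \<Rightarrow> real) \<Rightarrow> ((real^'i) \<times> real \<Rightarrow> (real^'i) \<times> real \<Rightarrow> real) \<Rightarrow> bool" where
  "C1_test \<phi> \<phi>' \<longleftrightarrow> (\<forall>z. (\<phi> has_derivative \<phi>' z) (at z)) \<and>
     (\<forall>h. continuous_on UNIV (\<lambda>z. \<phi>' z h))"

definition grad_x :: "((real^'i::finite) \<times> real \<Rightarrow> (real^'i) \<times> real \<Rightarrow> real) \<Rightarrow> (real^'i) \<times> real \<Rightarrow> real^'i" where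
  "grad_x \<phi>' z = (\<chi> i. \<phi>' z (axis i 1, 0))"

definition deriv_t :: "((real^'i::finite) \<times> real \<Rightarrow> (real^'i) \<times> real \<Rightarrow> real) \<Rightarrow> (real^'i) \<times> real \<Rightarrow> real" where
  "deriv_t \<phi>' z = \<phi>' z (0, 1)"

text \<open>Viscosity solution (Crandall--Lions / Evans convention for terminal value problems) of
  dV/dt + H(grad_x V) = 0 on R^m x [0,1), V(.,1) = G, in the class of uniformly continuous
  functions on R^m x [0,1].\<close>
definition viscosity_solution ::
  "(real^'i::finite \<Rightarrow> real) \<Rightarrow> (real^'i \<Rightarrow> real) \<Rightarrow> (real^'i \<Rightarrow> real \<Rightarrow> real) \<Rightarrow> bool" where
  "viscosity_solution H G V \<longleftrightarrow>
     uniformly_continuous_on (UNIV \<times> {0..1}) (\<lambda>(x,t). V x t) \<and>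
     (\<forall>x. V x 1 = G x) \<and>
     (\<forall>\<phi> \<phi>' x0 t0. C1_test \<phi> \<phi>' \<and> 0 < t0 \<and> t0 < 1 \<and>
        (\<exists>r>0. \<forall>x t. 0 < t \<and> t < 1 \<and> dist (x,t) (x0,t0) < r \<longrightarrow>
            V x t - \<phi> (x,t) \<le> V x0 t0 - \<phi> (x0,t0))
        \<longrightarrow> deriv_t \<phi>' (x0,t0) + H (grad_x \<phi>' (x0,t0)) \<ge> 0) \<and>
     (\<forall>\<phi> \<phi>' x0 t0. C1_test \<phi> \<phi>' \<and> 0 < t0 \<and> t0 < 1 \<and>
        (\<exists>r>0. \<forall>x t. 0 < t \<and> t < 1 \<and> dist (x,t) (x0,t0) < r \<longrightarrow>
            V x t - \<phi> (x,t) \<ge> V x0 t0 - \<phi> (x0,t0))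
        \<longrightarrow> deriv_t \<phi>' (x0,t0) + H (grad_x \<phi>' (x0,t0)) \<le> 0)"

end

theory Submission
  imports Defs
begin


lemma simplex_le1: assumes "q \<in> prob_simplex" shows "q x \<le> 1"
proof -
  have "q x \<le> sum q UNIV" using assms unfolding prob_simplex_def
    by (intro member_le_sum) auto
  thus ?thesis using assms unfolding prob_simplex_def by simp
qed

lemma simplex_nonempty: "(\<lambda>_. 1 / real CARD('a::finite)) \<in> (prob_simplex :: ('a \<Rightarrow> real) set)"
  unfolding prob_simplex_def by simp


lemma KL_nonneg:
  assumes q: "q \<in> prob_simplex" and p: "p \<in> prob_simplex" and pos: "\<forall>x. p x > 0"
  shows "0 \<le> KL q p"
proof -
  have t: "q x - p x \<le> (if q x = 0 then 0 else q x * ln (q x / p x))" for x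
  proof (cases "q x = 0")
    case True thus ?thesis using pos[rule_format, of x] by simp
  next
    case False
    have "q x \<ge> 0" using q unfolding prob_simplex_def by blast
    hence qx: "q x > 0" using False by linarith
    have px: "p x > 0" using pos by blast
    have "ln (p x / q x) \<le> p x / q x - 1" using px qx by (intro ln_le_minus_one) simp
    moreover have "ln (q x / p x) = - ln (p x / q x)" using px qx by (simp add: ln_div)
    ultimately have "q x * ln (q x / p x) \<ge> q x * (1 - p x / q x)" using qx
      by (intro mult_left_mono) auto
    moreover have "q x * (1 - p x / q x) = q x - p x" using qx by (simp add: field_simps)
    ultimately show ?thesis using False by simp
  qed
  have "0 = sum q UNIV - sum p UNIV" using p q unfolding prob_simplex_def by simp
  also have "\<dots> = (\<Sum>x\<in>UNIV. q x - p x)" by (simp add: sum_subtractf)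
  also have "\<dots> \<le> KL q p" unfolding KL_def by (intro sum_mono t)
  finally show ?thesis .
qed

lemma KL_le:
  assumes q: "q \<in> prob_simplex" and e: "0 < \<epsilon>" and lb: "\<forall>x. p x \<ge> \<epsilon>"
  shows "KL q p \<le> ln (1 / \<epsilon>)"
proof -
  have t: "(if q x = 0 then 0 else q x * ln (q x / p x)) \<le> q x * ln (1 / \<epsilon>)" for x
  proof (cases "q x = 0")
    case True thus ?thesis by simp
  next
    case False
    have "q x \<ge> 0" using q unfolding prob_simplex_def by blast
    hence qx: "q x > 0" using False by linarith
    have pe: "p x \<ge> \<epsilon>" using lb by blast
    hence px: "p x > 0" using e by linarith
    have "ln (q x / p x) = ln (q x) - ln (p x)" using qx px by (simp add: ln_div)
    moreover have "ln (q x) \<le> 0" using simplex_le1[OF q, of x] qx by simp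
    moreover have "ln \<epsilon> \<le> ln (p x)" using pe e by simp
    moreover have "ln (1 / \<epsilon>) = - ln \<epsilon>" using e by (simp add: ln_div)
    ultimately have "ln (q x / p x) \<le> ln (1 / \<epsilon>)" by linarith
    thus ?thesis using False qx by (simp add: mult_left_mono)
  qed
  have "KL q p \<le> (\<Sum>x\<in>UNIV. q x * ln (1 / \<epsilon>))" unfolding KL_def by (intro sum_mono t)
  also have "\<dots> = sum q UNIV * ln (1 / \<epsilon>)" by (simp add: sum_distrib_right)
  also have "\<dots> = ln (1 / \<epsilon>)" using q unfolding prob_simplex_def by simp
  finally show ?thesis .
qed


definition FF :: "('i::finite \<Rightarrow> 'a::finite \<Rightarrow> 'o::finite \<Rightarrow> real) \<Rightarrow> ('a \<Rightarrow> 'o \<Rightarrow> real) \<Rightarrow> ('a \<Rightarrow> real) \<Rightarrow> real^'i \<Rightarrow> real"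
  where "FF \<nu> Q w p = (\<Sum>i\<in>UNIV. \<Sum>a\<in>UNIV. w a * KL (Q a) (\<nu> i a) * p $ i)"

lemma Ham_FF: "Ham \<nu> p = (INF Q\<in>{Q. \<forall>a. Q a \<in> prob_simplex}. SUP w\<in>prob_simplex. FF \<nu> Q w p)"
  unfolding Ham_def FF_def ..

lemma S_bounds:
  assumes nd: "\<forall>i a. \<nu> i a \<in> prob_simplex" and lb: "\<forall>i a x. \<nu> i a x \<ge> \<epsilon>" and e: "0 < \<epsilon>"
    and Q: "\<forall>a. Q a \<in> prob_simplex" and w: "w \<in> prob_simplex"
  shows "0 \<le> (\<Sum>a\<in>UNIV. w a * KL (Q a) (\<nu> i a))" "(\<Sum>a\<in>UNIV. w a * KL (Q a) (\<nu> i a)) \<le> ln (1/\<epsilon>)"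
proof -
  have w0: "\<forall>a. 0 \<le> w a" using w unfolding prob_simplex_def by blast
  have pos: "\<forall>x. \<nu> i a x > 0" for a using lb e by (meson less_le_trans)
  have k0: "0 \<le> KL (Q a) (\<nu> i a)" for a using KL_nonneg[OF Q[rule_format] nd[rule_format] pos] .
  have kc: "KL (Q a) (\<nu> i a) \<le> ln (1/\<epsilon>)" for a
    using KL_le[OF Q[rule_format] e] lb by blast
  show "0 \<le> (\<Sum>a\<in>UNIV. w a * KL (Q a) (\<nu> i a))" using w0 k0 by (simp add: sum_nonneg)
  have "(\<Sum>a\<in>UNIV. w a * KL (Q a) (\<nu> i a)) \<le> (\<Sum>a\<in>UNIV. w a * ln (1/\<epsilon>))"
    using w0 kc by (intro sum_mono mult_left_mono) auto
  also have "\<dots> = ln (1/\<epsilon>)" using w unfolding prob_simplex_def by (simp add: sum_distrib_right[symmetric])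
  finally show "(\<Sum>a\<in>UNIV. w a * KL (Q a) (\<nu> i a)) \<le> ln (1/\<epsilon>)" .
qed

lemma FF_alt: "FF \<nu> Q w p = (\<Sum>i\<in>UNIV. (\<Sum>a\<in>UNIV. w a * KL (Q a) (\<nu> i a)) * p $ i)"
  unfolding FF_def by (simp add: sum_distrib_right)

lemma FF_abs:
  assumes nd: "\<forall>i a. \<nu> i a \<in> prob_simplex" and lb: "\<forall>i a x. \<nu> i a x \<ge> \<epsilon>" and e: "0 < \<epsilon>"
    and Q: "\<forall>a. Q a \<in> prob_simplex" and w: "w \<in> prob_simplex"
  shows "\<bar>FF \<nu> Q w p\<bar> \<le> ln (1/\<epsilon>) * (\<Sum>i\<in>UNIV. \<bar>p $ i\<bar>)"
proof -
  have "\<bar>FF \<nu> Q w p\<bar> \<le> (\<Sum>i\<in>UNIV. \<bar>(\<Sum>a\<in>UNIV. w a * KL (Q a) (\<nu> i a)) * p $ i\<bar>)"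
    unfolding FF_alt by (rule sum_abs)
  also have "\<dots> \<le> (\<Sum>i\<in>UNIV. ln (1/\<epsilon>) * \<bar>p $ i\<bar>)"
  proof (intro sum_mono)
    fix i
    show "\<bar>(\<Sum>a\<in>UNIV. w a * KL (Q a) (\<nu> i a)) * p $ i\<bar> \<le> ln (1/\<epsilon>) * \<bar>p $ i\<bar>"
      using S_bounds[OF nd lb e Q w, of i] by (simp add: abs_mult mult_right_mono)
  qed
  finally show ?thesis by (simp add: sum_distrib_left)
qed

lemma FF_shift:
  assumes nd: "\<forall>i a. \<nu> i a \<in> prob_simplex" and lb: "\<forall>i a x. \<nu> i a x \<ge> \<epsilon>" and e: "0 < \<epsilon>"
    and Q: "\<forall>a. Q a \<in> prob_simplex" and w: "w \<in> prob_simplex"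
    and le: "\<forall>i. a $ i \<le> b $ i + r i" and rn: "\<forall>i. 0 \<le> r i"
  shows "FF \<nu> Q w a \<le> FF \<nu> Q w b + ln (1/\<epsilon>) * (\<Sum>i\<in>UNIV. r i)"
proof -
  have "FF \<nu> Q w a \<le> (\<Sum>i\<in>UNIV. (\<Sum>a\<in>UNIV. w a * KL (Q a) (\<nu> i a)) * b $ i + ln (1/\<epsilon>) * r i)"
    unfolding FF_alt
  proof (intro sum_mono)
    fix i
    let ?S = "(\<Sum>a\<in>UNIV. w a * KL (Q a) (\<nu> i a))"
    have s0: "0 \<le> ?S" and sc: "?S \<le> ln (1/\<epsilon>)" using S_bounds[OF nd lb e Q w, of i] by auto
    have "?S * a $ i \<le> ?S * (b $ i + r i)" using s0 le by (intro mult_left_mono) auto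
    also have "\<dots> = ?S * b $ i + ?S * r i" by (simp add: algebra_simps)
    also have "\<dots> \<le> ?S * b $ i + ln (1/\<epsilon>) * r i" using sc rn by (simp add: mult_right_mono)
    finally show "?S * a $ i \<le> ?S * b $ i + ln (1/\<epsilon>) * r i" .
  qed
  also have "\<dots> = FF \<nu> Q w b + ln (1/\<epsilon>) * (\<Sum>i\<in>UNIV. r i)"
    unfolding FF_alt by (simp add: sum.distrib sum_distrib_left)
  finally show ?thesis .
qed

lemma Ham_shift:
  fixes \<nu> :: "'i::finite \<Rightarrow> 'a::finite \<Rightarrow> 'o::finite \<Rightarrow> real"
  assumes nd: "\<forall>i a. \<nu> i a \<in> prob_simplex" and lb: "\<forall>i a x. \<nu> i a x \<ge> \<epsilon>" and e: "0 < \<epsilon>"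
    and le: "\<forall>i. a $ i \<le> b $ i + r i" and rn: "\<forall>i. 0 \<le> r i"
  shows "Ham \<nu> a \<le> Ham \<nu> b + ln (1/\<epsilon>) * (\<Sum>i\<in>UNIV. r i)"
proof -
  let ?C = "ln (1/\<epsilon>) * (\<Sum>i\<in>UNIV. r i)"
  let ?QS = "{Q. \<forall>a. Q a \<in> prob_simplex} :: ('a \<Rightarrow> 'o \<Rightarrow> real) set"
  have wne: "(prob_simplex :: ('a \<Rightarrow> real) set) \<noteq> {}" using simplex_nonempty by (metis empty_iff)
  have "(\<lambda>_. (\<lambda>_. 1 / real CARD('o))) \<in> ?QS" using simplex_nonempty by simp
  hence Qne: "?QS \<noteq> {}" by (metis empty_iff)
  have bdd: "bdd_above ((\<lambda>w. FF \<nu> Q w p) ` prob_simplex)" if Q: "Q \<in> ?QS" for Q p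
  proof -
    have "\<forall>x\<in>(\<lambda>w. FF \<nu> Q w p) ` prob_simplex. x \<le> ln (1/\<epsilon>) * (\<Sum>i\<in>UNIV. \<bar>p $ i\<bar>)"
    proof
      fix x assume "x \<in> (\<lambda>w. FF \<nu> Q w p) ` prob_simplex"
      then obtain w where w: "w \<in> prob_simplex" and x: "x = FF \<nu> Q w p" by blast
      have "\<bar>FF \<nu> Q w p\<bar> \<le> ln (1/\<epsilon>) * (\<Sum>i\<in>UNIV. \<bar>p $ i\<bar>)"
        using FF_abs[OF nd lb e _ w] Q by blast
      thus "x \<le> ln (1/\<epsilon>) * (\<Sum>i\<in>UNIV. \<bar>p $ i\<bar>)" using x by linarith
    qed
    thus ?thesis unfolding bdd_above_def by blast
  qed
  have supge: "FF \<nu> Q w p \<le> (SUP w\<in>prob_simplex. FF \<nu> Q w p)" if "Q \<in> ?QS" "w \<in> prob_simplex" for Q w p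
    using bdd[OF that(1)] that(2) by (rule cSUP_upper2) (rule order_refl)
  have bddb: "bdd_below ((\<lambda>Q. SUP w\<in>prob_simplex. FF \<nu> Q w p) ` ?QS)" for p
  proof -
    obtain w0 :: "'a \<Rightarrow> real" where w0: "w0 \<in> prob_simplex" using wne by blast
    have "- (ln (1/\<epsilon>) * (\<Sum>i\<in>UNIV. \<bar>p $ i\<bar>)) \<le> (SUP w\<in>prob_simplex. FF \<nu> Q w p)" if "Q \<in> ?QS" for Q
    proof -
      have "\<bar>FF \<nu> Q w0 p\<bar> \<le> ln (1/\<epsilon>) * (\<Sum>i\<in>UNIV. \<bar>p $ i\<bar>)"
        using FF_abs[OF nd lb e _ w0] that by blast
      moreover have "FF \<nu> Q w0 p \<le> (SUP w\<in>prob_simplex. FF \<nu> Q w p)" using supge[OF that w0] .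
      ultimately show ?thesis by linarith
    qed
    thus ?thesis unfolding bdd_below_def by blast
  qed
  have step: "(SUP w\<in>prob_simplex. FF \<nu> Q w a) \<le> (SUP w\<in>prob_simplex. FF \<nu> Q w b) + ?C" if Q: "Q \<in> ?QS" for Q
  proof (rule cSUP_least[OF wne])
    fix w :: "'a \<Rightarrow> real" assume w: "w \<in> prob_simplex"
    have "FF \<nu> Q w a \<le> FF \<nu> Q w b + ?C" using FF_shift[OF nd lb e _ w le rn] Q by auto
    also have "\<dots> \<le> (SUP w\<in>prob_simplex. FF \<nu> Q w b) + ?C" using supge[OF Q w] by simp
    finally show "FF \<nu> Q w a \<le> (SUP w\<in>prob_simplex. FF \<nu> Q w b) + ?C" .
  qed
  have "Ham \<nu> a - ?C \<le> Ham \<nu> b"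
    unfolding Ham_FF
  proof (rule cINF_greatest[OF Qne])
    fix Q assume Q: "Q \<in> ?QS"
    have "(INF Q\<in>?QS. SUP w\<in>prob_simplex. FF \<nu> Q w a) \<le> (SUP w\<in>prob_simplex. FF \<nu> Q w a)"
      using bddb Q by (rule cINF_lower)
    thus "(INF Q\<in>?QS. SUP w\<in>prob_simplex. FF \<nu> Q w a) - ?C \<le> (SUP w\<in>prob_simplex. FF \<nu> Q w b)"
      using step[OF Q] by linarith
  qed
  thus ?thesis by linarith
qed


definition rho :: "real \<Rightarrow> real" where "rho r = (max r 0)^2"
definition drho :: "real \<Rightarrow> real" where "drho r = 2 * max r 0"

lemma rho_deriv: "(rho has_real_derivative drho r) (at r)"
proof -
  consider "r > 0" | "r < 0" | "r = 0" by linarith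
  thus ?thesis
  proof cases
    case 1
    have "((\<lambda>y. y^2) has_real_derivative drho r) (at r)"
      using 1 by (auto intro!: derivative_eq_intros simp: drho_def)
    thus ?thesis
      by (rule has_field_derivative_transform_within_open[where S="{0<..}"]) (use 1 in \<open>auto simp: rho_def\<close>)
  next
    case 2
    have "((\<lambda>y. 0) has_real_derivative drho r) (at r)" using 2 by (simp add: drho_def)
    thus ?thesis
      by (rule has_field_derivative_transform_within_open[where S="{..<0}"]) (use 2 in \<open>auto simp: rho_def\<close>)
  next
    case 3
    have "((\<lambda>y. (rho y - rho 0) / (y - 0)) \<longlongrightarrow> 0) (at 0)"
    proof (rule Lim_null_comparison)
      show "\<forall>\<^sub>F y in at 0. norm ((rho y - rho 0) / (y - 0)) \<le> norm y"
      proof (rule always_eventually, rule allI)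
        fix y :: real
        show "norm ((rho y - rho 0) / (y - 0)) \<le> norm y"
          by (cases "y > 0") (auto simp: rho_def power2_eq_square abs_mult)
      qed
      show "((\<lambda>y. norm y) \<longlongrightarrow> 0) (at (0::real))"
        by (auto intro!: tendsto_eq_intros)
    qed
    thus ?thesis using 3 unfolding has_field_derivative_iff by (simp add: drho_def)
  qed
qed

lemma rho_nonneg: "0 \<le> rho r" by (simp add: rho_def)
lemma drho_nonneg: "0 \<le> drho r" by (simp add: drho_def)
lemma continuous_drho: "continuous_on S drho" unfolding drho_def by (intro continuous_intros)
lemma continuous_on_drho_comp [continuous_intros]:
  "continuous_on S f \<Longrightarrow> continuous_on S (\<lambda>x. drho (f x))"
  unfolding drho_def by (intro continuous_intros)
lemma rho_chain [derivative_intros]: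
  "(g has_derivative g') (at x within s) \<Longrightarrow> ((\<lambda>x. rho (g x)) has_derivative (\<lambda>h. g' h * drho (g x))) (at x within s)"
  by (rule DERIV_compose_FDERIV[OF rho_deriv])



lemma vec_nth_deriv [derivative_intros]:
  "(g has_derivative g') F \<Longrightarrow> ((\<lambda>x. g x $ i) has_derivative (\<lambda>h. g' h $ i)) F"
  by (rule bounded_linear.has_derivative[OF bounded_linear_vec_nth])

lemma test_u:
  fixes yh :: "real^'i::finite" and \<delta> sh A k M c :: real
  defines "chi \<equiv> \<lambda>z::((real^'i) \<times> real). inner (fst z - yh) (fst z - yh) / (2*\<delta>) + (snd z - sh)^2 / (2*\<delta>)
      + A * exp (-(k * snd z)) + M * (\<Sum>i\<in>UNIV. rho (fst z $ i - c * snd z) + rho (-(fst z $ i)))"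
  and "chi' \<equiv> \<lambda>(z::(real^'i) \<times> real) (h::(real^'i) \<times> real). inner (fst h) (fst z - yh) / \<delta> + (snd z - sh) * snd h / \<delta>
      - k * A * exp (-(k * snd z)) * snd h
      + M * (\<Sum>i\<in>UNIV. drho (fst z $ i - c * snd z) * (fst h $ i - c * snd h) - drho (-(fst z $ i)) * fst h $ i)"
  assumes d: "\<delta> \<noteq> 0"
  shows "C1_test chi chi'"
proof -
  have "(chi has_derivative chi' z) (at z)" for z
    unfolding chi_def chi'_def
    apply (rule has_derivative_eq_rhs)
     apply (rule derivative_eq_intros refl | simp add: d)+
    apply (rule ext)
    apply (simp add: inner_commute algebra_simps sum_subtractf sum.distrib sum_distrib_left)
    apply (simp add: field_simps d)
    done
  moreover have "continuous_on UNIV (\<lambda>z. chi' z h)" for h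
    unfolding chi'_def by (intro continuous_intros) (simp_all add: d)
  ultimately show ?thesis unfolding C1_test_def by blast
qed


lemma test_v:
  fixes xh :: "real^'i::finite" and \<delta> th :: real
  assumes d: "\<delta> \<noteq> 0"
  shows "C1_test (\<lambda>z::(real^'i) \<times> real. -(inner (xh - fst z) (xh - fst z)) / (2*\<delta>) - (th - snd z)^2 / (2*\<delta>))
     (\<lambda>z h. inner (fst h) (xh - fst z) / \<delta> + (th - snd z) * snd h / \<delta>)"
proof -
  have "((\<lambda>z::(real^'i) \<times> real. -(inner (xh - fst z) (xh - fst z)) / (2*\<delta>) - (th - snd z)^2 / (2*\<delta>)) has_derivative
     (\<lambda>h. inner (fst h) (xh - fst z) / \<delta> + (th - snd z) * snd h / \<delta>)) (at z)" for z
    apply (rule has_derivative_eq_rhs)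
     apply (rule derivative_eq_intros refl | simp add: d)+
    apply (rule ext)
    apply (simp add: inner_commute algebra_simps)
    apply (simp add: field_simps d)
    done
  moreover have "continuous_on UNIV (\<lambda>z::(real^'i) \<times> real. inner (fst h) (xh - fst z) / \<delta> + (th - snd z) * snd h / \<delta>)" for h
    by (intro continuous_intros) (simp_all add: d)
  ultimately show ?thesis unfolding C1_test_def by blast
qed

lemma axis_inner: "axis i (1::real) \<bullet> w = w $ i"
  by (metis cart_eq_inner_axis inner_commute)

lemma grad_v: "grad_x (\<lambda>z h. inner (fst h) (xh - fst z) / \<delta> + (th - snd z) * snd h / \<delta>) z
   = (\<chi> i. (xh $ i - fst z $ i) / \<delta>)"
  unfolding grad_x_def by (simp add: axis_inner)

lemma dt_v: "deriv_t (\<lambda>z h. inner (fst h) (xh - fst z) / \<delta> + (th - snd z) * snd h / \<delta>) z = (th - snd z) / \<delta>"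
  unfolding deriv_t_def by simp

lemma grad_u: "grad_x (\<lambda>(z::(real^'i::finite) \<times> real) (h::(real^'i) \<times> real). inner (fst h) (fst z - yh) / \<delta> + (snd z - sh) * snd h / \<delta>
      - k * A * exp (-(k * snd z)) * snd h
      + M * (\<Sum>i\<in>UNIV. drho (fst z $ i - c * snd z) * (fst h $ i - c * snd h) - drho (-(fst z $ i)) * fst h $ i)) z
   = (\<chi> i. (fst z $ i - yh $ i) / \<delta> + M * (drho (fst z $ i - c * snd z) - drho (-(fst z $ i))))"
proof -
  have s: "(\<Sum>j\<in>UNIV. drho (fst z $ j - c * snd z) * (axis i 1 $ j) - drho (-(fst z $ j)) * axis i (1::real) $ j)
      = drho (fst z $ i - c * snd z) - drho (-(fst z $ i))" for i
  proof -
    have a: "axis i (1::real) $ j = (if j = i then 1 else 0)" for j by (simp add: axis_def)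
    show ?thesis by (simp add: a sum_subtractf if_distrib[of "\<lambda>x. _ * x"] sum.delta cong: if_cong)
  qed
  show ?thesis unfolding grad_x_def using s by (simp add: axis_inner)
qed

lemma dt_u: "deriv_t (\<lambda>(z::(real^'i::finite) \<times> real) (h::(real^'i) \<times> real). inner (fst h) (fst z - yh) / \<delta> + (snd z - sh) * snd h / \<delta>
      - k * A * exp (-(k * snd z)) * snd h
      + M * (\<Sum>i\<in>UNIV. drho (fst z $ i - c * snd z) * (fst h $ i - c * snd h) - drho (-(fst z $ i)) * fst h $ i)) z
   = (snd z - sh) / \<delta> - k * A * exp (-(k * snd z)) - c * M * (\<Sum>i\<in>UNIV. drho (fst z $ i - c * snd z))"
  unfolding deriv_t_def by (simp add: sum_distrib_left sum_distrib_right algebra_simps sum_negf)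


lemma dist_pair_le: "dist (a, b) (c, d) \<le> dist a c + dist b d"
  using sqrt_sum_squares_le_sum[of "dist a c" "dist b d"] by (simp add: dist_Pair_Pair)

lemma comparison:
  fixes u v :: "real^'i::finite \<Rightarrow> real \<Rightarrow> real" and H :: "real^'i \<Rightarrow> real" and c :: real
  assumes c: "0 < c"
  and Hs: "\<And>a b r. (\<And>i. a $ i \<le> b $ i + r i) \<Longrightarrow> (\<And>i. 0 \<le> r i) \<Longrightarrow> H a \<le> H b + c * (\<Sum>i\<in>UNIV. r i)"
  and ucu: "uniformly_continuous_on (UNIV \<times> {0..1}) (\<lambda>(x,t). u x t)"
  and ucv: "uniformly_continuous_on (UNIV \<times> {0..1}) (\<lambda>(x,t). v x t)"
  and subu: "\<forall>\<phi> \<phi>' x0 t0. C1_test \<phi> \<phi>' \<and> 0 < t0 \<and> t0 < 1 \<and>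
        (\<exists>r>0. \<forall>x t. 0 < t \<and> t < 1 \<and> dist (x,t) (x0,t0) < r \<longrightarrow>
            u x t - \<phi> (x,t) \<le> u x0 t0 - \<phi> (x0,t0))
        \<longrightarrow> deriv_t \<phi>' (x0,t0) + H (grad_x \<phi>' (x0,t0)) \<ge> 0"
  and supv: "\<forall>\<phi> \<phi>' x0 t0. C1_test \<phi> \<phi>' \<and> 0 < t0 \<and> t0 < 1 \<and>
        (\<exists>r>0. \<forall>x t. 0 < t \<and> t < 1 \<and> dist (x,t) (x0,t0) < r \<longrightarrow>
            v x t - \<phi> (x,t) \<ge> v x0 t0 - \<phi> (x0,t0))
        \<longrightarrow> deriv_t \<phi>' (x0,t0) + H (grad_x \<phi>' (x0,t0)) \<le> 0"
  and termc: "\<And>y. (\<forall>i. 0 \<le> y $ i \<and> y $ i \<le> c) \<Longrightarrow> u y 1 \<le> v y 1"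
  and t0: "0 < t0" "t0 < 1" and x0: "\<forall>i. 0 \<le> x0 $ i \<and> x0 $ i \<le> c * t0"
  shows "u x0 t0 \<le> v x0 t0"
proof (rule ccontr)
  assume neg: "\<not> u x0 t0 \<le> v x0 t0"
  define w0 where "w0 = u x0 t0 - v x0 t0"
  have w0: "w0 > 0" using neg unfolding w0_def by linarith
  define R where "R = c + 1"
  define D where "D = {z::(real^'i) \<times> real. (\<forall>i. - R \<le> fst z $ i \<and> fst z $ i \<le> R) \<and> 0 \<le> snd z \<and> snd z \<le> 1}"
  have Deq: "D = cbox (vec (-R)) (vec R) \<times> {0..1}"
    unfolding D_def by (auto simp: mem_box_cart)
  have cD: "compact D" unfolding Deq by (intro compact_Times compact_cbox compact_Icc)
  have DU: "D \<subseteq> UNIV \<times> {0..1}" unfolding D_def by auto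
  have cu: "continuous_on (UNIV \<times> {0..1}) (\<lambda>z. u (fst z) (snd z))"
    using uniformly_continuous_imp_continuous[OF ucu] by (simp add: case_prod_beta)
  have cv: "continuous_on (UNIV \<times> {0..1}) (\<lambda>z. v (fst z) (snd z))"
    using uniformly_continuous_imp_continuous[OF ucv] by (simp add: case_prod_beta)
  obtain Cbd where Cbd: "Cbd > 0" and bd: "\<And>z. z \<in> D \<Longrightarrow> \<bar>u (fst z) (snd z)\<bar> \<le> Cbd \<and> \<bar>v (fst z) (snd z)\<bar> \<le> Cbd"
  proof -
    obtain B1 where B1: "\<forall>y\<in>(\<lambda>z. u (fst z) (snd z)) ` D. norm y \<le> B1"
      using compact_imp_bounded[OF compact_continuous_image[OF continuous_on_subset[OF cu DU] cD]]
      unfolding bounded_iff by blast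
    obtain B2 where B2: "\<forall>y\<in>(\<lambda>z. v (fst z) (snd z)) ` D. norm y \<le> B2"
      using compact_imp_bounded[OF compact_continuous_image[OF continuous_on_subset[OF cv DU] cD]]
      unfolding bounded_iff by blast
    show ?thesis
      by (rule that[of "\<bar>B1\<bar> + \<bar>B2\<bar> + 1"]) (use B1 B2 in force)+
  qed
  obtain \<beta> where \<beta>: "\<beta> > 0" and ucu': "\<And>z z'. z \<in> UNIV \<times> {0..1} \<Longrightarrow> z' \<in> UNIV \<times> {0..1} \<Longrightarrow> dist z z' < \<beta> \<Longrightarrow>
        \<bar>u (fst z) (snd z) - u (fst z') (snd z')\<bar> < w0/8"
    and ucv': "\<And>z z'. z \<in> UNIV \<times> {0..1} \<Longrightarrow> z' \<in> UNIV \<times> {0..1} \<Longrightarrow> dist z z' < \<beta> \<Longrightarrow>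
        \<bar>v (fst z) (snd z) - v (fst z') (snd z')\<bar> < w0/8"
  proof -
    have e: "w0/8 > 0" using w0 by simp
    obtain b1 where b1: "b1 > 0" "\<forall>z\<in>UNIV \<times> {0..1}. \<forall>z'\<in>UNIV \<times> {0..1}. dist z' z < b1 \<longrightarrow>
        dist ((\<lambda>(x,t). u x t) z') ((\<lambda>(x,t). u x t) z) < w0/8"
      using ucu e unfolding uniformly_continuous_on_def by metis
    obtain b2 where b2: "b2 > 0" "\<forall>z\<in>UNIV \<times> {0..1}. \<forall>z'\<in>UNIV \<times> {0..1}. dist z' z < b2 \<longrightarrow>
        dist ((\<lambda>(x,t). v x t) z') ((\<lambda>(x,t). v x t) z) < w0/8"
      using ucv e unfolding uniformly_continuous_on_def by metis
    show ?thesis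
    proof (rule that[of "min b1 b2"])
      show "min b1 b2 > 0" using b1 b2 by simp
    next
      fix z z' :: "(real^'i) \<times> real"
      assume "z \<in> UNIV \<times> {0..1}" "z' \<in> UNIV \<times> {0..1}" "dist z z' < min b1 b2"
      thus "\<bar>u (fst z) (snd z) - u (fst z') (snd z')\<bar> < w0/8"
        using b1(2) by (auto simp: case_prod_beta dist_real_def dist_commute)
    next
      fix z z' :: "(real^'i) \<times> real"
      assume "z \<in> UNIV \<times> {0..1}" "z' \<in> UNIV \<times> {0..1}" "dist z z' < min b1 b2"
      thus "\<bar>v (fst z) (snd z) - v (fst z') (snd z')\<bar> < w0/8"
        using b2(2) by (auto simp: case_prod_beta dist_real_def dist_commute)
    qed
  qed
  define m where "m = min (1/2) (\<beta>/3)"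
  have m: "0 < m" "m \<le> 1/2" "m \<le> \<beta>/3" using \<beta> unfolding m_def by auto
  define M where "M = 2 * Cbd / m^2 + 1"
  have M: "M > 0" "M * m^2 > 2 * Cbd"
  proof -
    show "M > 0" unfolding M_def using Cbd m by (simp add: add_pos_nonneg)
    have "M * m^2 = 2 * Cbd + m^2" unfolding M_def using m by (simp add: field_simps)
    thus "M * m^2 > 2 * Cbd" using m by simp
  qed
  define A where "A = 4 * Cbd + 2"
  define k where "k = 2 * A / (w0 * t0) + 1"
  define \<theta> where "\<theta> = 1 / (2 * k)"
  have A: "A > 0" unfolding A_def using Cbd by simp
  have k: "k > 0" unfolding k_def using A w0 t0 by (simp add: add_pos_nonneg)
  have th: "\<theta> > 0" unfolding \<theta>_def using k by simp
  define \<eta> where "\<eta> = min (min (1/4) (\<theta>/2)) (\<beta>/4)"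
  have \<eta>: "0 < \<eta>" "\<eta> \<le> 1/4" "\<eta> \<le> \<theta>/2" "\<eta> \<le> \<beta>/4" unfolding \<eta>_def using th \<beta> by auto
  define \<delta> where "\<delta> = \<eta>^2 / (8 * Cbd)"
  have \<delta>: "\<delta> > 0" unfolding \<delta>_def using \<eta> Cbd by simp
  have f_t0: "A * exp (-(k * t0)) < w0 / 2"
  proof -
    have "1 + k * t0 \<le> exp (k * t0)" by (rule exp_ge_add_one_self)
    hence "A * exp (-(k * t0)) * (1 + k * t0) \<le> A * exp (-(k * t0)) * exp (k * t0)"
      using A by (intro mult_left_mono) auto
    also have "\<dots> = A" by (simp add: exp_minus field_simps)
    finally have a: "A * exp (-(k * t0)) * (1 + k * t0) \<le> A" .
    have "k * t0 > 2 * A / w0" unfolding k_def using t0 w0 A by (simp add: field_simps)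
    hence "A * exp (-(k * t0)) * (2 * A / w0) < A" using a A
      by (smt (verit, best) exp_gt_zero mult_le_cancel_left mult_pos_pos)
    thus ?thesis using A w0 by (simp add: field_simps)
  qed
  have f_small: "A * exp (-(k * t)) \<ge> A / 2" if "t \<le> \<theta>" for t
  proof -
    have "1 + (-(k * t)) \<le> exp (-(k * t))" by (rule exp_ge_add_one_self)
    moreover have "k * t \<le> 1/2" using that k unfolding \<theta>_def by (simp add: field_simps)
    ultimately have "exp (-(k * t)) \<ge> 1/2" by linarith
    thus ?thesis using A by simp
  qed
  define Pen where "Pen = (\<lambda>(x::real^'i) (t::real). \<Sum>i\<in>UNIV. rho (x $ i - c * t) + rho (-(x $ i)))"
  define CH where "CH = (\<lambda>(y::real^'i) (s::real) (z::(real^'i) \<times> real). inner (fst z - y) (fst z - y) / (2*\<delta>) + (snd z - s)^2 / (2*\<delta>)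
      + A * exp (-(k * snd z)) + M * (\<Sum>i\<in>UNIV. rho (fst z $ i - c * snd z) + rho (-(fst z $ i))))"
  define \<Phi> where "\<Phi> = (\<lambda>p::((real^'i) \<times> real) \<times> ((real^'i) \<times> real).
      u (fst (fst p)) (snd (fst p)) - v (fst (snd p)) (snd (snd p)) - CH (fst (snd p)) (snd (snd p)) (fst p))"
  have ct0: "c * t0 \<le> c * 1" using c t0 by (intro mult_left_mono) auto
  have x0R: "-R \<le> x0$i \<and> x0$i \<le> R" for i using x0[rule_format, of i] ct0 c unfolding R_def by linarith
  have x0D: "(x0, t0) \<in> D" unfolding D_def using x0R t0 by simp
  have cPhi: "continuous_on (D \<times> D) \<Phi>"
  proof -
    have c1: "continuous_on (D \<times> D) (\<lambda>p. u (fst (fst p)) (snd (fst p)))"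
      by (rule continuous_on_compose2[OF continuous_on_subset[OF cu DU], of _ fst]) (auto intro!: continuous_intros)
    have c2: "continuous_on (D \<times> D) (\<lambda>p. v (fst (snd p)) (snd (snd p)))"
      by (rule continuous_on_compose2[OF continuous_on_subset[OF cv DU], of _ snd]) (auto intro!: continuous_intros)
    have c3: "continuous_on (D \<times> D) (\<lambda>p. CH (fst (snd p)) (snd (snd p)) (fst p))"
      unfolding CH_def rho_def by (intro continuous_intros) (use \<delta> in auto)
    show ?thesis unfolding \<Phi>_def by (intro continuous_intros c1 c2 c3)
  qed
  obtain P where PD: "P \<in> D \<times> D" and Pmax: "\<And>q. q \<in> D \<times> D \<Longrightarrow> \<Phi> q \<le> \<Phi> P"
    using continuous_attains_sup[OF compact_Times[OF cD cD] _ cPhi] x0D by blast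
  obtain xh th yh sh where Peq: "P = ((xh, th), (yh, sh))" by (metis prod.exhaust)
  have PhiE: "\<Phi> ((x,t),(y,s)) = u x t - v y s - (inner (x - y) (x - y) / (2*\<delta>) + (t - s)^2 / (2*\<delta>)
      + A * exp (-(k * t)) + M * Pen x t)" for x t y s
    by (simp add: \<Phi>_def CH_def Pen_def)
  have inDD: "((x,t),(y,s)) \<in> D \<times> D \<longleftrightarrow> (\<forall>i. -R \<le> x$i \<and> x$i \<le> R) \<and> 0 \<le> t \<and> t \<le> 1 \<and>
      (\<forall>i. -R \<le> y$i \<and> y$i \<le> R) \<and> 0 \<le> s \<and> s \<le> 1" for x t y s
    unfolding D_def by auto
  have hD: "(\<forall>i. -R \<le> xh$i \<and> xh$i \<le> R) \<and> 0 \<le> th \<and> th \<le> 1 \<and>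
      (\<forall>i. -R \<le> yh$i \<and> yh$i \<le> R) \<and> 0 \<le> sh \<and> sh \<le> 1"
    using PD unfolding Peq inDD .
  have Pen_nn: "0 \<le> Pen x t" for x t unfolding Pen_def by (intro sum_nonneg add_nonneg_nonneg rho_nonneg)
  have Pen0: "Pen x0 t0 = 0"
  proof -
    have "rho (x0 $ i - c * t0) + rho (-(x0 $ i)) = 0" for i
      using x0[rule_format, of i] unfolding rho_def by simp
    thus ?thesis unfolding Pen_def by simp
  qed
  have PhiP: "\<Phi> P = u xh th - v yh sh - (inner (xh - yh) (xh - yh) / (2*\<delta>) + (th - sh)^2 / (2*\<delta>)
      + A * exp (-(k * th)) + M * Pen xh th)" unfolding Peq PhiE ..
  have F0: "\<Phi> P > w0 / 2"
  proof -
    have "\<Phi> ((x0,t0),(x0,t0)) = w0 - A * exp (-(k * t0))"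
      unfolding PhiE Pen0 w0_def by simp
    moreover have "\<Phi> ((x0,t0),(x0,t0)) \<le> \<Phi> P" using Pmax x0D by blast
    ultimately show ?thesis using f_t0 by linarith
  qed
  have uvb: "u xh th - v yh sh \<le> 2 * Cbd"
  proof -
    have "\<bar>u xh th\<bar> \<le> Cbd" using bd[of "(xh,th)"] hD unfolding D_def by auto
    moreover have "\<bar>v yh sh\<bar> \<le> Cbd" using bd[of "(yh,sh)"] hD unfolding D_def by auto
    ultimately show ?thesis by linarith
  qed
  have q_nn: "0 \<le> inner (xh - yh) (xh - yh) / (2*\<delta>) + (th - sh)^2 / (2*\<delta>)"
    using \<delta> by (simp add: add_nonneg_nonneg)
  have F1: "\<Phi> P \<le> 2 * Cbd - A * exp (-(k * th)) - M * Pen xh th"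
    using PhiP uvb q_nn by linarith
  have F2: "inner (xh - yh) (xh - yh) + (th - sh)^2 \<le> \<eta>^2 / 2"
  proof -
    have "\<Phi> ((xh,th),(xh,th)) \<le> \<Phi> P" using Pmax hD inDD by blast
    hence "inner (xh - yh) (xh - yh) / (2*\<delta>) + (th - sh)^2 / (2*\<delta>) \<le> v xh th - v yh sh"
      unfolding PhiP PhiE by simp
    also have "\<dots> \<le> 2 * Cbd"
    proof -
      have "\<bar>v xh th\<bar> \<le> Cbd" using bd[of "(xh,th)"] hD unfolding D_def by auto
      moreover have "\<bar>v yh sh\<bar> \<le> Cbd" using bd[of "(yh,sh)"] hD unfolding D_def by auto
      ultimately show ?thesis by linarith
    qed
    finally have "(inner (xh - yh) (xh - yh) + (th - sh)^2) / (2*\<delta>) \<le> 2 * Cbd"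
      by (simp add: add_divide_distrib)
    hence "inner (xh - yh) (xh - yh) + (th - sh)^2 \<le> 2 * Cbd * (2 * \<delta>)"
      using \<delta> by (simp add: pos_divide_le_eq)
    also have "\<dots> = \<eta>^2 / 2" unfolding \<delta>_def using Cbd by (simp add: field_simps)
    finally show ?thesis .
  qed
  have nxy: "norm (xh - yh) < \<eta>"
  proof -
    have "(th - sh)^2 \<ge> 0" by simp
    hence "norm (xh - yh)^2 \<le> \<eta>^2 / 2" using F2 unfolding power2_norm_eq_inner by linarith
    also have "\<dots> < \<eta>^2" using \<eta> by simp
    finally show ?thesis using \<eta> by (smt (verit) power_mono norm_ge_zero)
  qed
  have tsh: "\<bar>th - sh\<bar> < \<eta>"
  proof -
    have "inner (xh - yh) (xh - yh) \<ge> 0" by simp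
    moreover have "\<bar>th - sh\<bar>^2 = (th - sh)^2" by simp
    ultimately have "\<bar>th - sh\<bar>^2 \<le> \<eta>^2 / 2" using F2 by linarith
    also have "\<dots> < \<eta>^2" using \<eta> by simp
    finally show ?thesis using \<eta> by (smt (verit) power_mono abs_ge_zero)
  qed
  have exp_nn: "0 \<le> A * exp (-(k * th))" using A by simp
  have PenBig: False if "Pen xh th \<ge> m^2"
  proof -
    have "M * m^2 \<le> M * Pen xh th" using that M by (intro mult_left_mono) auto
    thus False using F1 F0 M exp_nn w0 by linarith
  qed
  have Pen_ge: "rho (x$i - c*t) + rho (-(x$i)) \<le> Pen x t" for x t i
    unfolding Pen_def by (rule member_le_sum[of i UNIV "\<lambda>i. rho (x$i - c*t) + rho (-(x$i))"])
      (auto intro: add_nonneg_nonneg rho_nonneg)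
  have rho_ge: "rho r \<ge> a^2" if "r \<ge> a" "a \<ge> 0" for r a
    unfolding rho_def using that by (intro power_mono) auto
  have cth: "c * th \<le> c" using c hD by (simp add: mult_left_le)
  have F3: "-1/2 < xh$i \<and> xh$i < c + 1/2" for i
  proof (rule ccontr)
    assume "\<not> (-1/2 < xh$i \<and> xh$i < c + 1/2)"
    hence "xh$i - c*th \<ge> 1/2 \<or> -(xh$i) \<ge> 1/2" using cth by linarith
    hence "rho (xh$i - c*th) + rho (-(xh$i)) \<ge> (1/2)^2"
    proof
      assume "xh$i - c*th \<ge> 1/2"
      hence "rho (xh$i - c*th) \<ge> (1/2)^2" by (intro rho_ge) auto
      thus ?thesis using rho_nonneg[of "-(xh$i)"] by linarith
    next
      assume "-(xh$i) \<ge> 1/2"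
      hence "rho (-(xh$i)) \<ge> (1/2)^2" by (intro rho_ge) auto
      thus ?thesis using rho_nonneg[of "xh$i - c*th"] by linarith
    qed
    hence "Pen xh th \<ge> (1/2)^2" using Pen_ge[of xh i th] by linarith
    moreover have "m^2 \<le> (1/2)^2" using m by (intro power_mono) auto
    ultimately show False using PenBig by linarith
  qed
  have F4: "th > \<theta>"
  proof (rule ccontr)
    assume "\<not> th > \<theta>"
    hence "A * exp (-(k * th)) \<ge> A / 2" using f_small by simp
    moreover have "M * Pen xh th \<ge> 0" using M Pen_nn by simp
    moreover have "A / 2 = 2 * Cbd + 1" unfolding A_def by simp
    ultimately show False using F1 F0 w0 by linarith
  qed
  have sh0: "sh > 0" using F4 tsh \<eta> th by linarith
  have F5: "th < 1 \<and> sh < 1"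
  proof (rule ccontr)
    assume a: "\<not> (th < 1 \<and> sh < 1)"
    have th1: "1 - th < \<eta>" and sh1: "1 - sh < \<eta>" using a hD tsh \<eta> by auto
    define \<pi> where "\<pi> = (\<chi> i. max 0 (min c (xh$i)))"
    have \<pi>c: "\<forall>i. 0 \<le> \<pi>$i \<and> \<pi>$i \<le> c" unfolding \<pi>_def using c by auto
    have termwise: "(xh$i - \<pi>$i)^2 \<le> rho (xh$i - c*th) + rho (-(xh$i))" for i
    proof -
      consider "xh$i < 0" | "0 \<le> xh$i \<and> xh$i \<le> c" | "xh$i > c" by linarith
      thus ?thesis
      proof cases
        case 1
        hence "\<pi>$i = 0" unfolding \<pi>_def using c by simp
        thus ?thesis using 1 rho_nonneg[of "xh$i - c*th"] unfolding rho_def by simp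
      next
        case 2
        hence "\<pi>$i = xh$i" unfolding \<pi>_def by simp
        thus ?thesis using rho_nonneg by (simp add: add_nonneg_nonneg)
      next
        case 3
        hence "\<pi>$i = c" unfolding \<pi>_def using c by simp
        moreover have "rho (xh$i - c*th) \<ge> (xh$i - c)^2" using 3 cth by (intro rho_ge) auto
        ultimately show ?thesis using rho_nonneg[of "-(xh$i)"] by simp
      qed
    qed
    define d where "d = norm (xh - \<pi>)"
    have "d^2 = (\<Sum>i\<in>UNIV. (xh$i - \<pi>$i)^2)"
      unfolding d_def power2_norm_eq_inner inner_vec_def by (simp add: power2_eq_square)
    also have "\<dots> \<le> Pen xh th" unfolding Pen_def by (intro sum_mono termwise)
    finally have dP: "d^2 \<le> Pen xh th" .
    have dm: "d < m"
    proof (rule ccontr)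
      assume "\<not> d < m"
      hence "m^2 \<le> d^2" using m by (intro power_mono) auto
      thus False using dP PenBig by linarith
    qed
    have D1: "dist (xh, th) (\<pi>, 1) < \<beta>"
    proof -
      have "dist (xh, th) (\<pi>, 1) \<le> dist xh \<pi> + dist th 1" by (rule dist_pair_le)
      also have "\<dots> = d + (1 - th)" unfolding d_def dist_norm dist_real_def using hD by simp
      finally show ?thesis using dm m th1 \<eta> by linarith
    qed
    have D2: "dist (\<pi>, 1) (yh, sh) < \<beta>"
    proof -
      have "dist (\<pi>, 1) (yh, sh) \<le> dist \<pi> yh + dist 1 sh" by (rule dist_pair_le)
      also have "dist \<pi> yh \<le> dist \<pi> xh + dist xh yh" by (rule dist_triangle)
      also have "dist \<pi> xh = d" unfolding d_def by (simp add: dist_norm norm_minus_commute)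
      also have "dist xh yh < \<eta>" using nxy by (simp add: dist_norm)
      finally have "dist (\<pi>, 1) (yh, sh) < d + \<eta> + dist 1 sh" by simp
      moreover have "dist 1 sh = 1 - sh" using hD by (simp add: dist_real_def)
      ultimately show ?thesis using dm m sh1 \<eta> by linarith
    qed
    have "\<bar>u xh th - u \<pi> 1\<bar> < w0/8" using ucu'[of "(xh,th)" "(\<pi>,1)"] D1 hD by auto
    moreover have "\<bar>v \<pi> 1 - v yh sh\<bar> < w0/8" using ucv'[of "(\<pi>,1)" "(yh,sh)"] D2 hD by auto
    moreover have "u \<pi> 1 \<le> v \<pi> 1" using termc \<pi>c by blast
    ultimately have "u xh th - v yh sh < w0/4" by linarith
    moreover have "M * Pen xh th \<ge> 0" using M Pen_nn by simp
    ultimately show False using PhiP q_nn exp_nn F0 w0 by linarith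
  qed
  have F6: "\<bar>yh$i - xh$i\<bar> < 1/4" for i
  proof -
    have "\<bar>(xh - yh)$i\<bar> \<le> norm (xh - yh)" by (rule component_le_norm_cart)
    thus ?thesis using nxy \<eta> by (simp add: abs_minus_commute)
  qed
  define chi' where "chi' = (\<lambda>(z::(real^'i) \<times> real) (h::(real^'i) \<times> real). inner (fst h) (fst z - yh) / \<delta> + (snd z - sh) * snd h / \<delta>
      - k * A * exp (-(k * snd z)) * snd h
      + M * (\<Sum>i\<in>UNIV. drho (fst z $ i - c * snd z) * (fst h $ i - c * snd h) - drho (-(fst z $ i)) * fst h $ i))"
  have C1u: "C1_test (CH yh sh) chi'" unfolding CH_def chi'_def by (rule test_u) (use \<delta> in simp)
  have LMu: "\<exists>r>0. \<forall>x t. 0 < t \<and> t < 1 \<and> dist (x,t) (xh,th) < r \<longrightarrow>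
            u x t - CH yh sh (x,t) \<le> u xh th - CH yh sh (xh,th)"
  proof (intro exI[of _ "1/4"] conjI allI impI)
    fix x t assume a: "0 < t \<and> t < 1 \<and> dist (x,t) (xh,th) < 1/4"
    have xi: "\<bar>x$i - xh$i\<bar> < 1/4" for i
    proof -
      have "\<bar>(x - xh)$i\<bar> \<le> norm (x - xh)" by (rule component_le_norm_cart)
      also have "\<dots> = dist (fst (x,t)) (fst (xh,th))" by (simp add: dist_norm)
      also have "\<dots> \<le> dist (x,t) (xh,th)" by (rule dist_fst_le)
      finally show ?thesis using a by simp
    qed
    have "-R \<le> x$i \<and> x$i \<le> R" for i using xi[of i] F3[of i] c unfolding R_def abs_less_iff
      by auto
    hence "((x,t),(yh,sh)) \<in> D \<times> D" using inDD hD a by auto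
    hence "\<Phi> ((x,t),(yh,sh)) \<le> \<Phi> P" by (rule Pmax)
    thus "u x t - CH yh sh (x,t) \<le> u xh th - CH yh sh (xh,th)" unfolding Peq \<Phi>_def by simp
  qed simp
  have subI: "deriv_t chi' (xh,th) + H (grad_x chi' (xh,th)) \<ge> 0"
    using subu[rule_format, of "CH yh sh" chi' th xh] C1u LMu F4 th F5 by auto
  define psi where "psi = (\<lambda>z::(real^'i) \<times> real. -(inner (xh - fst z) (xh - fst z)) / (2*\<delta>) - (th - snd z)^2 / (2*\<delta>))"
  define psi' where "psi' = (\<lambda>(z::(real^'i) \<times> real) (h::(real^'i) \<times> real). inner (fst h) (xh - fst z) / \<delta> + (th - snd z) * snd h / \<delta>)"
  have C1v: "C1_test psi psi'" unfolding psi_def psi'_def by (rule test_v) (use \<delta> in simp)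
  have LMv: "\<exists>r>0. \<forall>y s. 0 < s \<and> s < 1 \<and> dist (y,s) (yh,sh) < r \<longrightarrow>
            v y s - psi (y,s) \<ge> v yh sh - psi (yh,sh)"
  proof (intro exI[of _ "1/4"] conjI allI impI)
    fix y s assume a: "0 < s \<and> s < 1 \<and> dist (y,s) (yh,sh) < 1/4"
    have yi: "\<bar>y$i - yh$i\<bar> < 1/4" for i
    proof -
      have "\<bar>(y - yh)$i\<bar> \<le> norm (y - yh)" by (rule component_le_norm_cart)
      also have "\<dots> = dist (fst (y,s)) (fst (yh,sh))" by (simp add: dist_norm)
      also have "\<dots> \<le> dist (y,s) (yh,sh)" by (rule dist_fst_le)
      finally show ?thesis using a by simp
    qed
    have "-R \<le> y$i \<and> y$i \<le> R" for i using yi[of i] F3[of i] F6[of i] c unfolding R_def abs_less_iff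
      by auto
    hence "((xh,th),(y,s)) \<in> D \<times> D" using inDD hD a by auto
    hence "\<Phi> ((xh,th),(y,s)) \<le> \<Phi> P" by (rule Pmax)
    moreover have "psi (y,s) = -(inner (xh - y) (xh - y) / (2*\<delta>)) - (th - s)^2 / (2*\<delta>)" for y s
      unfolding psi_def by simp
    ultimately show "v y s - psi (y,s) \<ge> v yh sh - psi (yh,sh)" unfolding PhiP PhiE by simp
  qed simp
  have supI: "deriv_t psi' (yh,sh) + H (grad_x psi' (yh,sh)) \<le> 0"
    using supv[rule_format, of psi psi' sh yh] C1v LMv sh0 F5 by auto
  have dtu: "deriv_t chi' (xh,th) = (th - sh) / \<delta> - k * A * exp (-(k * th)) - c * M * (\<Sum>i\<in>UNIV. drho (xh $ i - c * th))"
    unfolding chi'_def dt_u by simp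
  have gu: "grad_x chi' (xh,th) = (\<chi> i. (xh $ i - yh $ i) / \<delta> + M * (drho (xh $ i - c * th) - drho (-(xh $ i))))"
    unfolding chi'_def grad_u by simp
  have dtv: "deriv_t psi' (yh,sh) = (th - sh) / \<delta>" unfolding psi'_def dt_v by simp
  have gv: "grad_x psi' (yh,sh) = (\<chi> i. (xh $ i - yh $ i) / \<delta>)" unfolding psi'_def grad_v by simp
  have Hle: "H (grad_x chi' (xh,th)) \<le> H (grad_x psi' (yh,sh)) + c * (\<Sum>i\<in>UNIV. M * drho (xh $ i - c * th))"
  proof (rule Hs)
    fix i
    show "0 \<le> M * drho (xh $ i - c * th)" using M drho_nonneg by simp
    have "0 \<le> M * drho (-(xh $ i))" using M drho_nonneg by simp
    thus "grad_x chi' (xh,th) $ i \<le> grad_x psi' (yh,sh) $ i + M * drho (xh $ i - c * th)"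
      unfolding gu gv by (simp add: algebra_simps)
  qed
  have "c * (\<Sum>i\<in>UNIV. M * drho (xh $ i - c * th)) = c * M * (\<Sum>i\<in>UNIV. drho (xh $ i - c * th))"
    by (simp add: sum_distrib_left mult.assoc)
  moreover have "k * A * exp (-(k * th)) > 0" using k A by simp
  ultimately show False using subI supI Hle dtu dtv by linarith
qed


lemma eq_at0:
  fixes u v :: "real^'i::finite \<Rightarrow> real \<Rightarrow> real"
  assumes ucu: "uniformly_continuous_on (UNIV \<times> {0..1}) (\<lambda>(x,t). u x t)"
  and ucv: "uniformly_continuous_on (UNIV \<times> {0..1}) (\<lambda>(x,t). v x t)"
  and eq: "\<And>s. 0 < s \<Longrightarrow> s < 1 \<Longrightarrow> u z s = v z s"
  shows "u z 0 = v z 0"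
proof (rule ccontr)
  assume ne: "u z 0 \<noteq> v z 0"
  define e where "e = \<bar>u z 0 - v z 0\<bar> / 3"
  have e: "e > 0" using ne unfolding e_def by simp
  obtain b1 where b1: "b1 > 0" "\<forall>p\<in>UNIV \<times> {0..1}. \<forall>p'\<in>UNIV \<times> {0..1}. dist p' p < b1 \<longrightarrow>
        dist ((\<lambda>(x,t). u x t) p') ((\<lambda>(x,t). u x t) p) < e"
    using ucu e unfolding uniformly_continuous_on_def by metis
  obtain b2 where b2: "b2 > 0" "\<forall>p\<in>UNIV \<times> {0..1}. \<forall>p'\<in>UNIV \<times> {0..1}. dist p' p < b2 \<longrightarrow>
        dist ((\<lambda>(x,t). v x t) p') ((\<lambda>(x,t). v x t) p) < e"
    using ucv e unfolding uniformly_continuous_on_def by metis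
  define s where "s = min (1/2) (min b1 b2 / 2)"
  have s: "0 < s" "s < 1" "s < b1" "s < b2" unfolding s_def using b1 b2 by auto
  have d: "dist (z, s) (z, 0) = s" using s by (simp add: dist_Pair_Pair dist_real_def)
  have "dist (u z s) (u z 0) < e" using b1(2) s d by (auto dest!: bspec[of _ _ "(z,0)"] bspec[of _ _ "(z,s)"])
  moreover have "dist (v z s) (v z 0) < e" using b2(2) s d by (auto dest!: bspec[of _ _ "(z,0)"] bspec[of _ _ "(z,s)"])
  moreover have "u z s = v z s" using eq s by simp
  ultimately have "\<bar>u z 0 - v z 0\<bar> < 2 * e" by (simp add: dist_real_def)
  thus False unfolding e_def by simp
qed

theorem mainTheorem7:
  fixes \<nu> :: "'i::finite \<Rightarrow> 'a::finite \<Rightarrow> 'o::finite \<Rightarrow> real"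
    and \<epsilon> :: real
    and g' :: "real^'i \<Rightarrow> real"
    and V V' :: "real^'i \<Rightarrow> real \<Rightarrow> real"
  assumes m2: "CARD('i) \<ge> 2"
    and eps: "0 < \<epsilon>" "\<epsilon> < 1"
    and nu_dist: "\<forall>i a. \<nu> i a \<in> prob_simplex"
    and nu_lb: "\<forall>i a x. \<nu> i a x \<ge> \<epsilon>"
    and V_sol: "viscosity_solution (Ham \<nu>) gpay V"
    and g'_bdd: "bounded (range g')"
    and g'_lip: "\<exists>L. L-lipschitz_on UNIV g'"
    and g'_supp: "compact (closure {x. g' x \<noteq> 0})"
    and g'_eq: "\<forall>x. (\<forall>i. 0 \<le> x $ i \<and> x $ i \<le> ln (1 / \<epsilon>)) \<longrightarrow> g' x = gpay x"
    and V'_sol: "viscosity_solution (Ham \<nu>) g' V'"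
  shows "(\<forall>i. \<forall>w\<in>prob_simplex. \<forall>Q. (\<forall>a. Q a \<in> prob_simplex) \<longrightarrow>
            (\<Sum>a\<in>UNIV. w a * KL (Q a) (\<nu> i a)) \<le> ln (1 / \<epsilon>)) \<and>
         (\<forall>x t. 0 \<le> t \<and> t \<le> 1 \<and> (\<forall>i. 0 \<le> x $ i \<and> x $ i \<le> ln (1 / \<epsilon>) * t)
            \<longrightarrow> V x t = V' x t)"
proof (intro conjI allI ballI impI)
  fix i :: 'i and w :: "'a \<Rightarrow> real" and Q :: "'a \<Rightarrow> 'o \<Rightarrow> real"
  assume "w \<in> prob_simplex" "\<forall>a. Q a \<in> prob_simplex"
  thus "(\<Sum>a\<in>UNIV. w a * KL (Q a) (\<nu> i a)) \<le> ln (1 / \<epsilon>)"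
    using S_bounds(2)[OF nu_dist nu_lb eps(1)] by blast
next
  fix x :: "real^'i" and t :: real
  assume xt: "0 \<le> t \<and> t \<le> 1 \<and> (\<forall>i. 0 \<le> x $ i \<and> x $ i \<le> ln (1 / \<epsilon>) * t)"
  define c where "c = ln (1 / \<epsilon>)"
  have c: "c > 0" unfolding c_def using eps by simp
  have Hs: "Ham \<nu> a \<le> Ham \<nu> b + c * (\<Sum>i\<in>UNIV. r i)"
    if "\<And>i. a $ i \<le> b $ i + r i" "\<And>i. 0 \<le> r i" for a b r
    unfolding c_def by (rule Ham_shift[OF nu_dist nu_lb eps(1)]) (use that in auto)
  note V = V_sol[unfolded viscosity_solution_def]
  note V' = V'_sol[unfolded viscosity_solution_def]
  note Vuc = V[THEN conjunct1] and V1 = V[THEN conjunct2, THEN conjunct1]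
    and Vsub = V[THEN conjunct2, THEN conjunct2, THEN conjunct1]
    and Vsup = V[THEN conjunct2, THEN conjunct2, THEN conjunct2]
  note V'uc = V'[THEN conjunct1] and V'1 = V'[THEN conjunct2, THEN conjunct1]
    and V'sub = V'[THEN conjunct2, THEN conjunct2, THEN conjunct1]
    and V'sup = V'[THEN conjunct2, THEN conjunct2, THEN conjunct2]
  have term1: "V y 1 \<le> V' y 1" and term2: "V' y 1 \<le> V y 1" if "\<forall>i. 0 \<le> y $ i \<and> y $ i \<le> c" for y
    using V1 V'1 g'_eq that unfolding c_def by auto
  have mid: "V x0 t0 = V' x0 t0" if "0 < t0" "t0 < 1" "\<forall>i. 0 \<le> x0 $ i \<and> x0 $ i \<le> c * t0" for x0 t0
  proof (rule antisym)
    show "V x0 t0 \<le> V' x0 t0"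
      apply (rule comparison[of c "Ham \<nu>" V V'])
      apply (rule c)
      apply (rule Hs, assumption+)
      apply (rule Vuc)
      apply (rule V'uc)
      apply (rule Vsub)
      apply (rule V'sup)
      apply (rule term1, assumption)
      using that apply auto
      done
    show "V' x0 t0 \<le> V x0 t0"
      apply (rule comparison[of c "Ham \<nu>" V' V])
      apply (rule c)
      apply (rule Hs, assumption+)
      apply (rule V'uc)
      apply (rule Vuc)
      apply (rule V'sub)
      apply (rule Vsup)
      apply (rule term2, assumption)
      using that apply auto
      done
  qed
  consider "t = 0" | "0 < t \<and> t < 1" | "t = 1" using xt by linarith
  thus "V x t = V' x t"
  proof cases
    case 1
    hence x0: "x = 0" using xt by (simp add: vec_eq_iff) (meson order_antisym)
    show ?thesis unfolding 1 x0
      by (rule eq_at0[OF Vuc V'uc]) (use mid c in auto)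
  next
    case 2 thus ?thesis using mid xt unfolding c_def by blast
  next
    case 3 thus ?thesis using V1 V'1 g'_eq xt by auto
  qed
qed

end
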